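(* Let $\Omega\subseteq\mathbb R^d$ be a nonempty open set, $A\in\mathcal A(\Omega)$, $b,c\in L^\infty(\Omega;\mathbb C^d)$, $V\in L^1_{\rm loc}(\Omega)$ nonnegative. Let $1<r<p<\infty$ and $q=p/(p-1)$. Then: (i) $(A,b,c,V)\in\mathcal S_p(\Omega)$ if and only if $(A^*,c,b,V)\in\mathcal S_q(\Omega)$, where $A^*$ is the pointwise conjugate transpose. (ii) $\mathcal S_r(\Omega)\cap\mathcal S_p(\Omega)\subseteq\mathcal S_s(\Omega)$ for all $s\in[r,p]$. In particular, $\{\mathcal B_p(\Omega):p\in[2,\infty)\}$ is a decreasing chain, i.e. $\mathcal B_{p'}(\Omega)\subseteq\mathcal B_p(\Omega)$ whenever $2\le p\le p'<\infty$.
   Context: $\langle \xi,\sigma\rangle=\sum_j\xi_j\overline{\sigma_j}$. $\mathcal{A}(\Omega)$: measurable $A:\Omega\to\mathbb{C}^{d\times d}$ with $\lambda,\Lambda>0$ such that $\Re\langle A(x)\xi,\xi\rangle\ge\lambda|\xi|^2$, $|\langle A(x)\xi,\sigma\rangle|\le\Lambda|\xi||\sigma|$ a.e. $\mathcal{J}_s\xi=\frac s2(\xi+(1-\frac2s)\overline\xi)$. $\Delta_s(A)=\operatorname{ess\,inf}_{x}\min_{|\xi|=1}\Re\langle A(x)\xi,\xi+|1-2/s|\overline\xi\rangle$, $\mathcal A_s(\Omega)=\{A\in\mathcal A(\Omega):\Delta_s(A)>0\}$. $\Gamma_s^{(A,b,c,V)}(x,\xi)=\Re\langle A(x)\xi,\mathcal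 J_s\xi\rangle+\Re\langle b(x)+\mathcal J_sc(x),\xi\rangle+V(x)$. $\mathcal S_s(\Omega)$: quadruples $(A,b,c,V)$ ($A\in\mathcal A(\Omega)$, $b,c\in L^\infty(\Omega;\mathbb C^d)$, $0\le V\in L^1_{\rm loc}$) with $A\in\mathcal A_s(\Omega)$, $|b-c|\le M\sqrt V$ a.e. for some $M>0$, and $\Gamma_s(x,\xi)\ge\mu(|\xi|^2+V(x))$ for a.e. $x$, all $\xi$, for some $\mu>0$. $\mathcal B_p(\Omega)=\mathcal S_p(\Omega)\cap\mathcal S_{p/(p-1)}(\Omega)$. *)

theory Defs
  imports "HOL-Analysis.Analysis"
begin

text \<open>Points of \<Omega> live in real^'d, coefficient vectors in complex^'d,
  matrices in complex^'d^'d; the dimension d is CARD('d).\<close>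

type_synonym ('d) cmat_field = "real^'d \<Rightarrow> complex^'d^'d"
type_synonym ('d) cvec_field = "real^'d \<Rightarrow> complex^'d"

definition cinner :: "complex^'d \<Rightarrow> complex^'d \<Rightarrow> complex" where
  "cinner \<xi> \<sigma> = (\<Sum>j\<in>UNIV. \<xi>$j * cnj (\<sigma>$j))"

definition cconj :: "complex^'d \<Rightarrow> complex^'d" where
  "cconj \<xi> = (\<chi> j. cnj (\<xi>$j))"

definition conj_transpose :: "complex^'d^'d \<Rightarrow> complex^'d^'d" where
  "conj_transpose M = (\<chi> i j. cnj (M$j$i))"

definition ellA :: "(real^'d) set \<Rightarrow> ('d cmat_field) set" where
  "ellA \<Omega> = {A. A \<in> borel_measurable (lebesgue_on \<Omega>) \<and>
     (\<exists>lam Lam. lam > 0 \<and> Lam > 0 \<and>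
        (AE x in lebesgue_on \<Omega>.
           (\<forall>\<xi>. Re (cinner (A x *v \<xi>) \<xi>) \<ge> lam * (norm \<xi>)\<^sup>2) \<and>
           (\<forall>\<xi> \<sigma>. cmod (cinner (A x *v \<xi>) \<sigma>) \<le> Lam * norm \<xi> * norm \<sigma>)))}"

definition Jop :: "real \<Rightarrow> complex^'d \<Rightarrow> complex^'d" where
  "Jop s \<xi> = complex_of_real (s/2) *s (\<xi> + complex_of_real (1 - 2/s) *s cconj \<xi>)"

text \<open>\<Delta>_s(A) = ess inf over x of min over unit \<xi> of
  Re<A(x)\<xi>, \<xi> + |1-2/s| conj \<xi>>; the essential infimum of g is
  sup {t. g \<ge> t a.e.} (taken in ereal).\<close>
definition Delta :: "real \<Rightarrow> (real^'d) set \<Rightarrow> 'd cmat_field \<Rightarrow> ereal" where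
  "Delta s \<Omega> A = (SUP t \<in> {t::real. AE x in lebesgue_on \<Omega>.
      (\<forall>\<xi>::complex^'d. norm \<xi> = 1 \<longrightarrow>
         t \<le> Re (cinner (A x *v \<xi>) (\<xi> + complex_of_real \<bar>1 - 2/s\<bar> *s cconj \<xi>)))}. ereal t)"

definition ellA_s :: "real \<Rightarrow> (real^'d) set \<Rightarrow> ('d cmat_field) set" where
  "ellA_s s \<Omega> = {A \<in> ellA \<Omega>. Delta s \<Omega> A > 0}"

definition Gamma ::
  "real \<Rightarrow> 'd cmat_field \<Rightarrow> 'd cvec_field \<Rightarrow> 'd cvec_field \<Rightarrow> (real^'d \<Rightarrow> real)
     \<Rightarrow> real^'d \<Rightarrow> complex^'d \<Rightarrow> real" where
  "Gamma s A b c V x \<xi> = Re (cinner (A x *v \<xi>) (Jop s \<xi>))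
      + Re (cinner (b x + Jop s (c x)) \<xi>) + V x"

definition Linf :: "(real^'d) set \<Rightarrow> ('d cvec_field) set" where
  "Linf \<Omega> = {b. b \<in> borel_measurable (lebesgue_on \<Omega>) \<and>
      (\<exists>M. AE x in lebesgue_on \<Omega>. norm (b x) \<le> M)}"

definition L1loc_nonneg :: "(real^'d) set \<Rightarrow> (real^'d \<Rightarrow> real) set" where
  "L1loc_nonneg \<Omega> = {V. V \<in> borel_measurable (lebesgue_on \<Omega>) \<and>
      (\<forall>K. compact K \<and> K \<subseteq> \<Omega> \<longrightarrow> integrable (lebesgue_on K) V) \<and>
      (AE x in lebesgue_on \<Omega>. 0 \<le> V x)}"

definition S_class :: "real \<Rightarrow> (real^'d) set \<Rightarrow>
   ('d cmat_field \<times> 'd cvec_field \<times> 'd cvec_field \<times> (real^'d \<Rightarrow> real)) set" where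
  "S_class s \<Omega> = {(A,b,c,V). A \<in> ellA \<Omega> \<and> b \<in> Linf \<Omega> \<and> c \<in> Linf \<Omega> \<and>
      V \<in> L1loc_nonneg \<Omega> \<and> A \<in> ellA_s s \<Omega> \<and>
      (\<exists>M>0. AE x in lebesgue_on \<Omega>. norm (b x - c x) \<le> M * sqrt (V x)) \<and>
      (\<exists>\<mu>>0. AE x in lebesgue_on \<Omega>. \<forall>\<xi>.
          Gamma s A b c V x \<xi> \<ge> \<mu> * ((norm \<xi>)\<^sup>2 + V x))}"

definition B_class :: "real \<Rightarrow> (real^'d) set \<Rightarrow>
   ('d cmat_field \<times> 'd cvec_field \<times> 'd cvec_field \<times> (real^'d \<Rightarrow> real)) set" where
  "B_class p \<Omega> = S_class p \<Omega> \<inter> S_class (p/(p-1)) \<Omega>"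

end

theory Submission
  imports Defs
begin

lemma comp_scaleR: "((a::real) *\<^sub>R (x::complex^'n))$i = complex_of_real a * x$i"
  by (simp only: vector_scaleR_component) (simp add: scaleR_conv_of_real)

lemma ofreal_smult: "complex_of_real a *s (x::complex^'n) = a *\<^sub>R x"
  by (simp add: vec_eq_iff comp_scaleR del: vector_scaleR_component)

lemma re_cinner: "Re (cinner u v) = inner u v"
  by (simp add: cinner_def inner_vec_def inner_complex_def Re_sum)

lemma cconj_add: "cconj (x + y) = cconj x + cconj y"
  by (simp add: cconj_def vec_eq_iff)
lemma cconj_diff: "cconj (x - y) = cconj x - cconj y"
  by (simp add: cconj_def vec_eq_iff)
lemma cconj_scaleR: "cconj (a *\<^sub>R x) = a *\<^sub>R cconj x"
  by (simp add: cconj_def vec_eq_iff comp_scaleR)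
lemma cconj_cconj[simp]: "cconj (cconj x) = x"
  by (simp add: cconj_def vec_eq_iff)
lemma inner_cconj_left: "inner (cconj u) v = inner u (cconj v)"
  by (simp add: cconj_def inner_vec_def inner_complex_def)
lemma inner_cconj_both: "inner (cconj u) (cconj v) = inner u v"
  by (simp add: cconj_def inner_vec_def inner_complex_def)
lemma norm_cconj[simp]: "norm (cconj x) = norm x"
  by (metis inner_cconj_both norm_eq_sqrt_inner)

lemma mv_scaleR: "(M::complex^'n^'m) *v (a *\<^sub>R x) = a *\<^sub>R (M *v x)"
  by (simp add: vec_eq_iff matrix_vector_mult_def scaleR_sum_right)
lemma mv_smult: "(M::complex^'n^'m) *v (a *s x) = a *s (M *v x)"
  by (simp add: vec_eq_iff matrix_vector_mult_def sum_distrib_left mult.left_commute)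
lemma cconj_smult: "cconj (a *s x) = cnj a *s cconj x"
  by (simp add: cconj_def vec_eq_iff)
lemma inner_ii: "inner (\<i> *s (a::complex^'n)) (\<i> *s b) = inner a b"
  by (simp add: inner_vec_def inner_complex_def algebra_simps)
lemma inner_ii': "inner (\<i> *s (a::complex^'n)) (-\<i> *s b) = - inner a b"
  by (simp add: inner_vec_def inner_complex_def algebra_simps flip: sum_negf)
lemma norm_ii: "norm (\<i> *s (a::complex^'n)) = norm a"
  by (metis inner_ii norm_eq_sqrt_inner)

lemma ct_cinner: "cinner (conj_transpose M *v \<xi>) \<sigma> = cnj (cinner (M *v \<sigma>) \<xi>)"
  apply (simp add: cinner_def conj_transpose_def matrix_vector_mult_def sum_distrib_left sum_distrib_right)
  apply (subst sum.swap)
  apply (simp add: mult_ac)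
  done

lemma ct_ct[simp]: "conj_transpose (conj_transpose M) = M"
  by (simp add: conj_transpose_def vec_eq_iff)

lemma ct_linear: "linear conj_transpose"
  by (rule linearI) (simp_all add: conj_transpose_def vec_eq_iff comp_scaleR)

lemma Jop_eq: "Jop s \<xi> = (s/2) *\<^sub>R (\<xi> + (1 - 2/s) *\<^sub>R cconj \<xi>)"
  by (simp only: Jop_def ofreal_smult)


lemma Jop_affine: "s \<noteq> 0 \<Longrightarrow> Jop s \<xi> = s *\<^sub>R ((1/2) *\<^sub>R (\<xi> + cconj \<xi>)) - cconj \<xi>"
  unfolding Jop_eq by (simp add: algebra_simps)

lemma Jop_selfadj: "inner (Jop s u) v = inner u (Jop s v)"
  unfolding Jop_eq by (simp add: inner_add_left inner_add_right inner_cconj_left)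

lemma Jop_inv:
  assumes "p > 1" "q = p/(p-1)"
  shows "Jop p (Jop q \<eta>) = \<eta>"
proof -
  define k where "k = 1 - 2/p"
  have kq: "1 - 2/q = - k" using assms(1) unfolding assms(2) k_def by (simp add: field_simps)
  have pq: "(p/2)*(q/2)*(1-k^2) = 1" using assms by (simp add: k_def field_simps power2_eq_square)
  have c1: "cconj (Jop q \<eta>) = (q/2) *\<^sub>R (cconj \<eta> - k *\<^sub>R \<eta>)"
    by (simp add: Jop_eq cconj_add cconj_diff cconj_scaleR kq)
  have "Jop p (Jop q \<eta>) = (p/2) *\<^sub>R ((q/2) *\<^sub>R (\<eta> - k *\<^sub>R cconj \<eta>) + k *\<^sub>R ((q/2) *\<^sub>R (cconj \<eta> - k *\<^sub>R \<eta>)))"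
    by (simp only: Jop_eq[of p] c1 flip: k_def) (simp add: Jop_eq kq)
  also have "\<dots> = ((p/2)*(q/2)*(1-k^2)) *\<^sub>R \<eta>"
    apply (simp add: algebra_simps power2_eq_square flip: scaleR_left_distrib)
    apply (rule disjI1)
    apply (simp add: field_simps)
    done
  finally show ?thesis using pq by simp
qed

lemma Jop_norm:
  assumes "s > 0" "\<bar>1 - 2/s\<bar> < 1"
  shows "(s/2) * (1 - \<bar>1 - 2/s\<bar>) * norm \<eta> \<le> norm (Jop s \<eta>)"
proof -
  have "norm \<eta> - \<bar>1 - 2/s\<bar> * norm \<eta> \<le> norm (\<eta> + (1 - 2/s) *\<^sub>R cconj \<eta>)"
    using norm_diff_ineq[of \<eta> "((1 - 2/s) *\<^sub>R cconj \<eta>)"] by simp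
  hence "(s/2) * (norm \<eta> - \<bar>1 - 2/s\<bar> * norm \<eta>) \<le> (s/2) * norm (\<eta> + (1 - 2/s) *\<^sub>R cconj \<eta>)"
    using assms by (intro mult_left_mono) auto
  moreover have "norm (Jop s \<eta>) = (s/2) * norm (\<eta> + (1 - 2/s) *\<^sub>R cconj \<eta>)"
    unfolding Jop_eq using assms by (simp del: scaleR_add_right)
  moreover have "(s/2) * (1 - \<bar>1 - 2/s\<bar>) * norm \<eta> = (s/2) * (norm \<eta> - \<bar>1 - 2/s\<bar> * norm \<eta>)"
    by (simp add: algebra_simps)
  ultimately show ?thesis by linarith
qed

lemma Delta_form: "Re (cinner (M *v \<xi>) (\<xi> + complex_of_real K *s cconj \<xi>))
   = inner (M *v \<xi>) \<xi> + K * inner (M *v \<xi>) (cconj \<xi>)"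
  by (simp add: re_cinner ofreal_smult inner_add_right del: vector_scaleR_component)

lemma Delta_transfer:
  fixes M :: "complex^'n^'n"
  assumes K: "0 \<le> K" "K < 1" and t: "t > 0"
    and H: "\<forall>\<xi>. norm \<xi> = 1 \<longrightarrow> t \<le> Re (cinner (M *v \<xi>) (\<xi> + complex_of_real K *s cconj \<xi>))"
  shows "\<forall>\<eta>. norm \<eta> = 1 \<longrightarrow> t*(1-K)/(1+K) \<le> Re (cinner (conj_transpose M *v \<eta>) (\<eta> + complex_of_real K *s cconj \<eta>))"
proof -
  have a: "t * (norm \<xi>)\<^sup>2 \<le> inner (M *v \<xi>) (\<xi> + K *\<^sub>R cconj \<xi>)" for \<xi>
  proof (cases "\<xi> = 0")
    case True thus ?thesis by (simp add: cconj_def)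
  next
    case False
    define u where "u = (1/norm \<xi>) *\<^sub>R \<xi>"
    have nu: "norm u = 1" using False by (simp add: u_def)
    have xi: "\<xi> = norm \<xi> *\<^sub>R u" using False by (simp add: u_def)
    have "t \<le> inner (M *v u) (u + K *\<^sub>R cconj u)"
      using H nu by (simp add: Delta_form inner_add_right)
    hence "(norm \<xi>)\<^sup>2 * t \<le> (norm \<xi>)\<^sup>2 * inner (M *v u) (u + K *\<^sub>R cconj u)"
      by (intro mult_left_mono) auto
    also have "\<dots> = inner (M *v \<xi>) (\<xi> + K *\<^sub>R cconj \<xi>)"
      apply (subst (2 3 4) xi)
      by (simp add: mv_scaleR cconj_scaleR inner_add_right power2_eq_square algebra_simps)
    finally show ?thesis by (simp add: mult.commute)
  qed
  have b: "t * (norm \<xi>)\<^sup>2 \<le> inner (M *v \<xi>) (\<xi> - K *\<^sub>R cconj \<xi>)" for \<xi>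
  proof -
    have e: "\<i> *s \<xi> + K *\<^sub>R cconj (\<i> *s \<xi>) = \<i> *s (\<xi> - K *\<^sub>R cconj \<xi>)"
      by (simp add: cconj_smult vec_eq_iff comp_scaleR algebra_simps del: vector_scaleR_component)
    have "t * (norm (\<i> *s \<xi>))\<^sup>2 \<le> inner (M *v (\<i> *s \<xi>)) (\<i> *s \<xi> + K *\<^sub>R cconj (\<i> *s \<xi>))"
      by (rule a)
    thus ?thesis by (simp only: e mv_smult inner_ii norm_ii)
  qed
  show ?thesis
  proof (intro allI impI)
    fix \<eta> :: "complex^'n" assume n1: "norm \<eta> = 1"
    define \<xi> where "\<xi> = \<eta> + K *\<^sub>R cconj \<eta>"
    have e: "\<xi> - K *\<^sub>R cconj \<xi> = (1 - K^2) *\<^sub>R \<eta>"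
      by (simp add: \<xi>_def cconj_add cconj_scaleR algebra_simps power2_eq_square)
    have "norm \<eta> \<le> norm \<xi> + norm (K *\<^sub>R cconj \<eta>)"
      using norm_triangle_ineq4[of \<xi> "K *\<^sub>R cconj \<eta>"] by (simp add: \<xi>_def)
    hence nx: "1 - K \<le> norm \<xi>" using n1 K by simp
    have "t * (1-K)^2 \<le> t * (norm \<xi>)^2"
      using nx K t by (intro mult_left_mono power_mono) auto
    also have "\<dots> \<le> (1 - K^2) * inner (M *v \<xi>) \<eta>"
      using b[of \<xi>] by (simp add: e)
    finally have "t * (1-K)^2 \<le> (1 - K^2) * inner (M *v \<xi>) \<eta>" .
    moreover have "(1 - K^2) = (1-K)*(1+K)" by (simp add: power2_eq_square algebra_simps)
    ultimately have "t * (1-K) \<le> (1+K) * inner (M *v \<xi>) \<eta>"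
      using K by (simp add: power2_eq_square mult.assoc mult_le_cancel_left_pos)
    hence "t*(1-K)/(1+K) \<le> inner (M *v \<xi>) \<eta>"
      using K by (simp add: divide_le_eq mult.commute)
    moreover have "Re (cinner (conj_transpose M *v \<eta>) (\<eta> + complex_of_real K *s cconj \<eta>)) = inner (M *v \<xi>) \<eta>"
      by (simp add: ct_cinner re_cinner \<xi>_def ofreal_smult del: vector_scaleR_component)
    ultimately show "t*(1-K)/(1+K) \<le> Re (cinner (conj_transpose M *v \<eta>) (\<eta> + complex_of_real K *s cconj \<eta>))"
      by simp
  qed
qed

lemma Gamma_transfer:
  assumes "p > 1" "q = p/(p-1)"
  shows "Gamma q (\<lambda>x. conj_transpose (A x)) c b V x \<eta> = Gamma p A b c V x (Jop q \<eta>)"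
proof -
  have inv: "Jop p (Jop q \<eta>) = \<eta>" by (rule Jop_inv[OF assms])
  have "Gamma q (\<lambda>x. conj_transpose (A x)) c b V x \<eta> =
      inner (A x *v Jop q \<eta>) \<eta> + inner (c x) \<eta> + inner (Jop q (b x)) \<eta> + V x"
    by (simp add: Gamma_def ct_cinner re_cinner inner_add_left)
  also have "\<dots> = inner (A x *v Jop q \<eta>) (Jop p (Jop q \<eta>)) + inner (c x) (Jop p (Jop q \<eta>))
        + inner (b x) (Jop q \<eta>) + V x"
    by (simp add: inv Jop_selfadj)
  also have "\<dots> = Gamma p A b c V x (Jop q \<eta>)"
    by (simp add: Gamma_def re_cinner inner_add_left Jop_selfadj)
  finally show ?thesis .
qed

lemma Gamma_affine:
  assumes "s \<noteq> 0"
  shows "Gamma s A b c V x \<xi> =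
    s * (inner (A x *v \<xi>) ((1/2) *\<^sub>R (\<xi> + cconj \<xi>)) + inner ((1/2) *\<^sub>R (c x + cconj (c x))) \<xi>)
    + (V x + inner (b x) \<xi> - inner (cconj (c x)) \<xi> - inner (A x *v \<xi>) (cconj \<xi>))"
  using assms
  by (simp add: Gamma_def re_cinner Jop_affine inner_add_left inner_add_right inner_diff_left
       inner_diff_right algebra_simps del: scaleR_add_right)


lemma Delta_pos_iff:
  "Delta s \<Omega> A > 0 \<longleftrightarrow> (\<exists>t>0. AE x in lebesgue_on \<Omega>. (\<forall>\<xi>::complex^'d. norm \<xi> = 1 \<longrightarrow>
         t \<le> Re (cinner (A x *v \<xi>) (\<xi> + complex_of_real \<bar>1 - 2/s\<bar> *s cconj \<xi>))))"
  unfolding Delta_def by (auto simp: less_SUP_iff zero_ereal_def)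

lemma ct_measurable:
  assumes "A \<in> borel_measurable M"
  shows "(\<lambda>x. conj_transpose (A x)) \<in> borel_measurable M"
proof -
  have "continuous_on UNIV (conj_transpose :: complex^'n^'n \<Rightarrow> _)"
    using ct_linear linear_continuous_on linear_conv_bounded_linear by blast
  thus ?thesis using borel_measurable_continuous_on assms by blast
qed

lemma ellA_ct:
  assumes "A \<in> ellA \<Omega>"
  shows "(\<lambda>x. conj_transpose (A x)) \<in> ellA \<Omega>"
proof -
  obtain lam Lam where ll: "lam > 0" "Lam > 0" and ae: "AE x in lebesgue_on \<Omega>.
           (\<forall>\<xi>. Re (cinner (A x *v \<xi>) \<xi>) \<ge> lam * (norm \<xi>)\<^sup>2) \<and>
           (\<forall>\<xi> \<sigma>. cmod (cinner (A x *v \<xi>) \<sigma>) \<le> Lam * norm \<xi> * norm \<sigma>)"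
    using assms unfolding ellA_def by blast
  have "AE x in lebesgue_on \<Omega>.
           (\<forall>\<xi>. Re (cinner (conj_transpose (A x) *v \<xi>) \<xi>) \<ge> lam * (norm \<xi>)\<^sup>2) \<and>
           (\<forall>\<xi> \<sigma>. cmod (cinner (conj_transpose (A x) *v \<xi>) \<sigma>) \<le> Lam * norm \<xi> * norm \<sigma>)"
    using ae
  proof eventually_elim
    case (elim x)
    thus ?case by (simp add: ct_cinner) (metis mult.assoc mult.commute)
  qed
  moreover have "(\<lambda>x. conj_transpose (A x)) \<in> borel_measurable (lebesgue_on \<Omega>)"
    using assms ct_measurable unfolding ellA_def by blast
  ultimately show ?thesis unfolding ellA_def using ll by blast
qed

lemma S_dual:
  fixes A :: "real^'d \<Rightarrow> complex^'d^'d"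
  assumes p: "p > 1" and q: "q = p/(p-1)" and S: "(A,b,c,V) \<in> S_class p \<Omega>"
  shows "((\<lambda>x. conj_transpose (A x)), c, b, V) \<in> S_class q \<Omega>"
proof -
  have A: "A \<in> ellA \<Omega>" and bL: "b \<in> Linf \<Omega>" and cL: "c \<in> Linf \<Omega>" and VL: "V \<in> L1loc_nonneg \<Omega>"
    and As: "A \<in> ellA_s p \<Omega>"
    and M: "\<exists>M>0. AE x in lebesgue_on \<Omega>. norm (b x - c x) \<le> M * sqrt (V x)"
    and G: "\<exists>\<mu>>0. AE x in lebesgue_on \<Omega>. \<forall>\<xi>. Gamma p A b c V x \<xi> \<ge> \<mu> * ((norm \<xi>)\<^sup>2 + V x)"
    using S unfolding S_class_def by auto
  define K where "K = \<bar>1 - 2/p\<bar>"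
  have Kq: "\<bar>1 - 2/q\<bar> = K" unfolding K_def q using p by (simp add: field_simps abs_minus_commute)
  have K: "0 \<le> K" "K < 1" using p by (auto simp: K_def abs_if field_simps)
  have q1: "q > 1" unfolding q using p by (simp add: field_simps)
  have Act: "(\<lambda>x. conj_transpose (A x)) \<in> ellA \<Omega>" by (rule ellA_ct[OF A])
  obtain t where t: "t > 0" and tae: "AE x in lebesgue_on \<Omega>. (\<forall>\<xi>::complex^'d. norm \<xi> = 1 \<longrightarrow>
         t \<le> Re (cinner (A x *v \<xi>) (\<xi> + complex_of_real K *s cconj \<xi>)))"
    using As unfolding ellA_s_def Delta_pos_iff K_def by blast
  have "AE x in lebesgue_on \<Omega>. (\<forall>\<xi>::complex^'d. norm \<xi> = 1 \<longrightarrow>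
         t*(1-K)/(1+K) \<le> Re (cinner (conj_transpose (A x) *v \<xi>) (\<xi> + complex_of_real \<bar>1 - 2/q\<bar> *s cconj \<xi>)))"
    using tae
  proof eventually_elim
    case (elim x) thus ?case unfolding Kq using Delta_transfer[OF K t] by blast
  qed
  moreover have "t*(1-K)/(1+K) > 0" using t K by simp
  ultimately have Acts: "(\<lambda>x. conj_transpose (A x)) \<in> ellA_s q \<Omega>"
    unfolding ellA_s_def Delta_pos_iff using Act by blast
  have M': "\<exists>M>0. AE x in lebesgue_on \<Omega>. norm (c x - b x) \<le> M * sqrt (V x)"
    using M by (simp add: norm_minus_commute)
  obtain \<mu> where mu: "\<mu> > 0" and muae: "AE x in lebesgue_on \<Omega>. \<forall>\<xi>. Gamma p A b c V x \<xi> \<ge> \<mu> * ((norm \<xi>)\<^sup>2 + V x)"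
    using G by blast
  have Vae: "AE x in lebesgue_on \<Omega>. 0 \<le> V x" using VL unfolding L1loc_nonneg_def by blast
  define cq where "cq = (q/2) * (1 - K)"
  have cq: "cq > 0" using q1 K by (simp add: cq_def)
  define \<mu>' where "\<mu>' = \<mu> * min (cq^2) 1"
  have mu': "\<mu>' > 0" using mu cq by (simp add: \<mu>'_def)
  have "AE x in lebesgue_on \<Omega>. \<forall>\<eta>. Gamma q (\<lambda>x. conj_transpose (A x)) c b V x \<eta> \<ge> \<mu>' * ((norm \<eta>)\<^sup>2 + V x)"
    using muae Vae
  proof eventually_elim
    case (elim x)
    show ?case
    proof
      fix \<eta> :: "complex^'d"
      have n: "cq * norm \<eta> \<le> norm (Jop q \<eta>)"
        using Jop_norm[of q \<eta>] q1 K Kq by (simp add: cq_def)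
      have n2: "cq^2 * (norm \<eta>)^2 \<le> (norm (Jop q \<eta>))^2"
        using power_mono[OF n] cq by (simp add: power_mult_distrib)
      have "\<mu>' * ((norm \<eta>)\<^sup>2 + V x) = \<mu> * (min (cq^2) 1 * (norm \<eta>)\<^sup>2 + min (cq^2) 1 * V x)"
        by (simp add: \<mu>'_def algebra_simps)
      also have "\<dots> \<le> \<mu> * ((norm (Jop q \<eta>))^2 + V x)"
      proof -
        have "min (cq^2) 1 * (norm \<eta>)\<^sup>2 \<le> cq^2 * (norm \<eta>)\<^sup>2" by (intro mult_right_mono) auto
        moreover have "min (cq^2) 1 * V x \<le> V x" using elim(2) by (simp add: mult_left_le_one_le)
        ultimately show ?thesis using mu n2 by (intro mult_left_mono) auto
      qed
      also have "\<dots> \<le> Gamma p A b c V x (Jop q \<eta>)" using elim(1) by blast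
      also have "\<dots> = Gamma q (\<lambda>x. conj_transpose (A x)) c b V x \<eta>"
        by (rule Gamma_transfer[OF p q, symmetric])
      finally show "\<mu>' * ((norm \<eta>)\<^sup>2 + V x) \<le> Gamma q (\<lambda>x. conj_transpose (A x)) c b V x \<eta>" .
    qed
  qed
  hence G': "\<exists>\<mu>>0. AE x in lebesgue_on \<Omega>. \<forall>\<eta>. Gamma q (\<lambda>x. conj_transpose (A x)) c b V x \<eta> \<ge> \<mu> * ((norm \<eta>)\<^sup>2 + V x)"
    using mu' by blast
  show ?thesis unfolding S_class_def using Act cL bL VL Acts M' G' by blast
qed


lemma affine_between:
  fixes a b r s p :: real
  assumes "r \<le> s" "s \<le> p" "m \<le> r*a + b" "m \<le> p*a + b"
  shows "m \<le> s*a + b"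
proof (cases "a \<ge> 0")
  case True
  hence "r*a \<le> s*a" using assms by (intro mult_right_mono) auto
  thus ?thesis using assms by linarith
next
  case False
  hence "p*a \<le> s*a" using assms by (intro mult_right_mono_neg) auto
  thus ?thesis using assms by linarith
qed

lemma S_interp:
  fixes X :: "'d cmat_field \<times> 'd cvec_field \<times> 'd cvec_field \<times> (real^'d \<Rightarrow> real)"
  assumes r: "0 < r" and rs: "r \<le> s" and sp: "s \<le> p"
    and Xr: "X \<in> S_class r \<Omega>" and Xp: "X \<in> S_class p \<Omega>"
  shows "X \<in> S_class s \<Omega>"
proof -
  obtain A b c V where X: "X = (A,b,c,V)" by (cases X) auto
  have A: "A \<in> ellA \<Omega>" and bL: "b \<in> Linf \<Omega>" and cL: "c \<in> Linf \<Omega>" and VL: "V \<in> L1loc_nonneg \<Omega>"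
    and Asr: "A \<in> ellA_s r \<Omega>" and Asp: "A \<in> ellA_s p \<Omega>"
    and M: "\<exists>M>0. AE x in lebesgue_on \<Omega>. norm (b x - c x) \<le> M * sqrt (V x)"
    and Gr: "\<exists>\<mu>>0. AE x in lebesgue_on \<Omega>. \<forall>\<xi>. Gamma r A b c V x \<xi> \<ge> \<mu> * ((norm \<xi>)\<^sup>2 + V x)"
    and Gp: "\<exists>\<mu>>0. AE x in lebesgue_on \<Omega>. \<forall>\<xi>. Gamma p A b c V x \<xi> \<ge> \<mu> * ((norm \<xi>)\<^sup>2 + V x)"
    using Xr Xp unfolding S_class_def X by auto
  have s0: "s > 0" "p > 0" using r rs sp by auto
  obtain lam Lam where ll: "lam > 0" and lae: "AE x in lebesgue_on \<Omega>.
           (\<forall>\<xi>. Re (cinner (A x *v \<xi>) \<xi>) \<ge> lam * (norm \<xi>)\<^sup>2) \<and>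
           (\<forall>\<xi> \<sigma>. cmod (cinner (A x *v \<xi>) \<sigma>) \<le> Lam * norm \<xi> * norm \<sigma>)"
    using A unfolding ellA_def by blast
  obtain tr where tr: "tr > 0" and trae: "AE x in lebesgue_on \<Omega>. (\<forall>\<xi>::complex^'d. norm \<xi> = 1 \<longrightarrow>
         tr \<le> Re (cinner (A x *v \<xi>) (\<xi> + complex_of_real \<bar>1 - 2/r\<bar> *s cconj \<xi>)))"
    using Asr unfolding ellA_s_def Delta_pos_iff by blast
  obtain tp where tp: "tp > 0" and tpae: "AE x in lebesgue_on \<Omega>. (\<forall>\<xi>::complex^'d. norm \<xi> = 1 \<longrightarrow>
         tp \<le> Re (cinner (A x *v \<xi>) (\<xi> + complex_of_real \<bar>1 - 2/p\<bar> *s cconj \<xi>)))"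
    using Asp unfolding ellA_s_def Delta_pos_iff by blast
  have d1: "2/s \<le> 2/r" using r rs by (simp add: frac_le)
  have d2: "2/p \<le> 2/s" using s0 sp by (simp add: frac_le)
  have Ks: "\<bar>1 - 2/s\<bar> \<le> max \<bar>1 - 2/r\<bar> \<bar>1 - 2/p\<bar>" using d1 d2 by (simp add: abs_if max_def)
  define t where "t = min lam (min tr tp)"
  have t: "t > 0" using ll tr tp by (simp add: t_def)
  have "AE x in lebesgue_on \<Omega>. (\<forall>\<xi>::complex^'d. norm \<xi> = 1 \<longrightarrow>
         t \<le> Re (cinner (A x *v \<xi>) (\<xi> + complex_of_real \<bar>1 - 2/s\<bar> *s cconj \<xi>)))"
    using lae trae tpae
  proof eventually_elim
    case (elim x)
    show ?case
    proof (intro allI impI)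
      fix \<xi> :: "complex^'d" assume n: "norm \<xi> = 1"
      define \<alpha> where "\<alpha> = inner (A x *v \<xi>) \<xi>"
      define \<beta> where "\<beta> = inner (A x *v \<xi>) (cconj \<xi>)"
      have f0: "lam \<le> \<alpha>" using elim(1) n unfolding \<alpha>_def re_cinner by (metis mult.right_neutral power_one)
      have fr: "tr \<le> \<alpha> + \<bar>1 - 2/r\<bar> * \<beta>" using elim(2) n by (simp add: Delta_form \<alpha>_def \<beta>_def)
      have fp: "tp \<le> \<alpha> + \<bar>1 - 2/p\<bar> * \<beta>" using elim(3) n by (simp add: Delta_form \<alpha>_def \<beta>_def)
      have "t \<le> \<alpha> + \<bar>1 - 2/s\<bar> * \<beta>"
      proof (cases "\<beta> \<ge> 0")
        case True
        hence "0 \<le> \<bar>1 - 2/s\<bar> * \<beta>" by simp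
        moreover have "t \<le> lam" by (simp add: t_def)
        ultimately show ?thesis using f0 by linarith
      next
        case False
        hence "max \<bar>1 - 2/r\<bar> \<bar>1 - 2/p\<bar> * \<beta> \<le> \<bar>1 - 2/s\<bar> * \<beta>"
          using Ks by (intro mult_right_mono_neg) auto
        moreover have "t \<le> \<alpha> + max \<bar>1 - 2/r\<bar> \<bar>1 - 2/p\<bar> * \<beta>"
          using fr fp by (auto simp: t_def max_def min_def)
        ultimately show ?thesis by linarith
      qed
      thus "t \<le> Re (cinner (A x *v \<xi>) (\<xi> + complex_of_real \<bar>1 - 2/s\<bar> *s cconj \<xi>))"
        by (simp add: Delta_form \<alpha>_def \<beta>_def)
    qed
  qed
  hence As: "A \<in> ellA_s s \<Omega>" unfolding ellA_s_def Delta_pos_iff using A t by blast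
  obtain \<mu>r where mur: "\<mu>r > 0" and mrae: "AE x in lebesgue_on \<Omega>. \<forall>\<xi>. Gamma r A b c V x \<xi> \<ge> \<mu>r * ((norm \<xi>)\<^sup>2 + V x)"
    using Gr by blast
  obtain \<mu>p where mup: "\<mu>p > 0" and mpae: "AE x in lebesgue_on \<Omega>. \<forall>\<xi>. Gamma p A b c V x \<xi> \<ge> \<mu>p * ((norm \<xi>)\<^sup>2 + V x)"
    using Gp by blast
  have Vae: "AE x in lebesgue_on \<Omega>. 0 \<le> V x" using VL unfolding L1loc_nonneg_def by blast
  define \<mu> where "\<mu> = min \<mu>r \<mu>p"
  have mu: "\<mu> > 0" using mur mup by (simp add: \<mu>_def)
  have "AE x in lebesgue_on \<Omega>. \<forall>\<xi>. Gamma s A b c V x \<xi> \<ge> \<mu> * ((norm \<xi>)\<^sup>2 + V x)"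
    using mrae mpae Vae
  proof eventually_elim
    case (elim x)
    show ?case
    proof
      fix \<xi> :: "complex^'d"
      have X0: "0 \<le> (norm \<xi>)\<^sup>2 + V x" using elim(3) by simp
      have "\<mu> * ((norm \<xi>)\<^sup>2 + V x) \<le> \<mu>r * ((norm \<xi>)\<^sup>2 + V x)"
        using X0 by (intro mult_right_mono) (auto simp: \<mu>_def)
      hence h1: "\<mu> * ((norm \<xi>)\<^sup>2 + V x) \<le> Gamma r A b c V x \<xi>" using elim(1) by (meson order_trans)
      have "\<mu> * ((norm \<xi>)\<^sup>2 + V x) \<le> \<mu>p * ((norm \<xi>)\<^sup>2 + V x)"
        using X0 by (intro mult_right_mono) (auto simp: \<mu>_def)
      hence h2: "\<mu> * ((norm \<xi>)\<^sup>2 + V x) \<le> Gamma p A b c V x \<xi>" using elim(2) by (meson order_trans)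
      show "\<mu> * ((norm \<xi>)\<^sup>2 + V x) \<le> Gamma s A b c V x \<xi>"
        unfolding Gamma_affine[of s, OF order.strict_implies_not_eq[OF s0(1), symmetric]]
        using affine_between[OF rs sp h1[unfolded Gamma_affine[of r, OF order.strict_implies_not_eq[OF r, symmetric]]]
              h2[unfolded Gamma_affine[of p, OF order.strict_implies_not_eq[OF s0(2), symmetric]]]]
        .
    qed
  qed
  hence G: "\<exists>\<mu>>0. AE x in lebesgue_on \<Omega>. \<forall>\<xi>. Gamma s A b c V x \<xi> \<ge> \<mu> * ((norm \<xi>)\<^sup>2 + V x)"
    using mu by blast
  show ?thesis unfolding X S_class_def using A bL cL VL As M G by blast
qed


theorem proposition3p2:
  fixes \<Omega> :: "(real^'d) set"
    and A :: "real^'d \<Rightarrow> complex^'d^'d"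
    and b c :: "real^'d \<Rightarrow> complex^'d"
    and V :: "real^'d \<Rightarrow> real"
    and r p q :: real
  assumes "open \<Omega>" and "\<Omega> \<noteq> {}"
    and "A \<in> ellA \<Omega>" and "b \<in> Linf \<Omega>" and "c \<in> Linf \<Omega>"
    and "V \<in> L1loc_nonneg \<Omega>"
    and "1 < r" and "r < p" and "q = p / (p - 1)"
  shows "((A, b, c, V) \<in> S_class p \<Omega> \<longleftrightarrow>
            ((\<lambda>x. conj_transpose (A x)), c, b, V) \<in> S_class q \<Omega>)
       \<and> (\<forall>s\<in>{r..p}. S_class r \<Omega> \<inter> S_class p \<Omega> \<subseteq> S_class s \<Omega>)
       \<and> (\<forall>p1 p2::real. 2 \<le> p1 \<and> p1 \<le> p2 \<longrightarrow> B_class p2 \<Omega> \<subseteq> B_class p1 \<Omega>)"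
proof (intro conjI)
  have p: "p > 1" using assms by simp
  have q1: "q > 1" unfolding assms(9) using p by (simp add: field_simps)
  have qq: "p = q/(q-1)" unfolding assms(9) using p by (simp add: field_simps)
  show "(A, b, c, V) \<in> S_class p \<Omega> \<longleftrightarrow> ((\<lambda>x. conj_transpose (A x)), c, b, V) \<in> S_class q \<Omega>"
  proof
    assume "(A, b, c, V) \<in> S_class p \<Omega>"
    thus "((\<lambda>x. conj_transpose (A x)), c, b, V) \<in> S_class q \<Omega>" by (rule S_dual[OF p assms(9)])
  next
    assume "((\<lambda>x. conj_transpose (A x)), c, b, V) \<in> S_class q \<Omega>"
    from S_dual[OF q1 qq this] show "(A, b, c, V) \<in> S_class p \<Omega>" by simp
  qed
  show "\<forall>s\<in>{r..p}. S_class r \<Omega> \<inter> S_class p \<Omega> \<subseteq> S_class s \<Omega>"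
    using S_interp[of r] assms(7) by auto
  show "\<forall>p1 p2::real. 2 \<le> p1 \<and> p1 \<le> p2 \<longrightarrow> B_class p2 \<Omega> \<subseteq> B_class p1 \<Omega>"
  proof (intro allI impI subsetI)
    fix p1 p2 :: real and X
    assume pp: "2 \<le> p1 \<and> p1 \<le> p2" and X: "X \<in> B_class p2 \<Omega>"
    have X1: "X \<in> S_class p2 \<Omega>" "X \<in> S_class (p2/(p2-1)) \<Omega>" using X by (auto simp: B_class_def)
    have a1: "p2/(p2-1) \<le> 2" using pp by (simp add: field_simps)
    have a0: "0 < p2/(p2-1)" using pp by simp
    have a2: "p2/(p2-1) \<le> p1/(p1-1)" using pp by (simp add: field_simps)
    have a3: "p1/(p1-1) \<le> 2" using pp by (simp add: field_simps)
    have "X \<in> S_class p1 \<Omega>"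
      using S_interp[OF a0 _ _ X1(2) X1(1)] a1 pp by auto
    moreover have "X \<in> S_class (p1/(p1-1)) \<Omega>"
      using S_interp[OF a0 a2 _ X1(2) X1(1)] a3 pp by auto
    ultimately show "X \<in> B_class p1 \<Omega>" by (simp add: B_class_def)
  qed
qed

end
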